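(* Let $G$ be a mirror graph and let $A\le\mathrm{Aut}(G)$ be the subgroup generated by all mirror automorphisms of $G$. Then $A$ acts regularly on $V(G)$ (transitively, with trivial vertex stabilizers). Consequently, for any vertex $v$ with neighbours $v_1,\dots,v_k$, $G\cong\mathrm{Cay}(A,\{\alpha_{vv_1},\dots,\alpha_{vv_k}\})$.
   Context: A mirror graph is a finite connected simple graph $G$ admitting a partition $\{E_1,\dots,E_k\}$ of its edges such that for every $i$ there is an automorphism $\alpha_i$ swapping the endpoints of every edge of $E_i$, with $G-E_i$ having exactly two components that $\alpha_i$ maps isomorphically onto each other. Mirror graphs are partial cubes whose mirror partition is the partition into $\Theta$-classes ($ab\,\Theta\,xy$ iff $d(a,x)+d(b,y)\neq d(a,y)+d(b,x)$). For an edge $xy$, the mirror automorphism $\alpha_{xy}$ is the unique automorphism swapping the endpoints of every edge $\Theta$-equivalent to $xy$. $\mathrm{Cay}(A,S)$ has vertex set $A$, with $\beta_1,\beta_2$ adjacent iff $\beta_1=s\beta_2$ for some $s\in S$. *)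

theory Defs
  imports "HOL-Algebra.Bij" "HOL-Algebra.Generated_Groups"
begin

definition simple_graph :: "'a set \<Rightarrow> ('a \<Rightarrow> 'a \<Rightarrow> bool) \<Rightarrow> bool" where
  "simple_graph V E \<longleftrightarrow>
     (\<forall>x y. E x y \<longrightarrow> x \<in> V \<and> y \<in> V) \<and> (\<forall>x y. E x y \<longrightarrow> E y x) \<and> (\<forall>x. \<not> E x x)"

definition finite_connected_simple_graph :: "'a set \<Rightarrow> ('a \<Rightarrow> 'a \<Rightarrow> bool) \<Rightarrow> bool" where
  "finite_connected_simple_graph V E \<longleftrightarrow>
     simple_graph V E \<and> finite V \<and> V \<noteq> {} \<and> (\<forall>x\<in>V. \<forall>y\<in>V. E\<^sup>*\<^sup>* x y)"

definition edges :: "('a \<Rightarrow> 'a \<Rightarrow> bool) \<Rightarrow> 'a set set" where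
  "edges E = {{x, y} | x y. E x y}"

definition components :: "'a set \<Rightarrow> ('a \<Rightarrow> 'a \<Rightarrow> bool) \<Rightarrow> 'a set set" where
  "components V E = {{y \<in> V. E\<^sup>*\<^sup>* x y} | x. x \<in> V}"

definition remove_edges :: "('a \<Rightarrow> 'a \<Rightarrow> bool) \<Rightarrow> 'a set set \<Rightarrow> 'a \<Rightarrow> 'a \<Rightarrow> bool" where
  "remove_edges E F = (\<lambda>x y. E x y \<and> {x, y} \<notin> F)"

text \<open>Automorphisms, as elements of the symmetric group BijGroup V
  (bijections of V, extensional, i.e. undefined outside V).\<close>
definition graph_aut :: "'a set \<Rightarrow> ('a \<Rightarrow> 'a \<Rightarrow> bool) \<Rightarrow> ('a \<Rightarrow> 'a) \<Rightarrow> bool" where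
  "graph_aut V E f \<longleftrightarrow> f \<in> Bij V \<and> (\<forall>x\<in>V. \<forall>y\<in>V. E x y \<longleftrightarrow> E (f x) (f y))"

definition swaps_edges :: "('a \<Rightarrow> 'a) \<Rightarrow> 'a set set \<Rightarrow> bool" where
  "swaps_edges f F \<longleftrightarrow> (\<forall>x y. {x, y} \<in> F \<longrightarrow> f x = y)"

definition mirror_graph :: "'a set \<Rightarrow> ('a \<Rightarrow> 'a \<Rightarrow> bool) \<Rightarrow> bool" where
  "mirror_graph V E \<longleftrightarrow> finite_connected_simple_graph V E \<and>
     (\<exists>P. \<Union>P = edges E \<and> {} \<notin> P \<and> (\<forall>F1\<in>P. \<forall>F2\<in>P. F1 \<noteq> F2 \<longrightarrow> F1 \<inter> F2 = {}) \<and>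
        (\<forall>F\<in>P. \<exists>\<alpha>. graph_aut V E \<alpha> \<and> swaps_edges \<alpha> F \<and>
            (\<exists>C1 C2. C1 \<noteq> C2 \<and> components V (remove_edges E F) = {C1, C2} \<and>
                     \<alpha> ` C1 = C2 \<and> \<alpha> ` C2 = C1)))"

definition gdist :: "('a \<Rightarrow> 'a \<Rightarrow> bool) \<Rightarrow> 'a \<Rightarrow> 'a \<Rightarrow> nat" where
  "gdist E x y = (LEAST n. (E ^^ n) x y)"

definition Theta :: "('a \<Rightarrow> 'a \<Rightarrow> bool) \<Rightarrow> 'a \<Rightarrow> 'a \<Rightarrow> 'a \<Rightarrow> 'a \<Rightarrow> bool" where
  "Theta E a b x y \<longleftrightarrow> E a b \<and> E x y \<and>
     gdist E a x + gdist E b y \<noteq> gdist E a y + gdist E b x"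

definition mirror_aut :: "'a set \<Rightarrow> ('a \<Rightarrow> 'a \<Rightarrow> bool) \<Rightarrow> 'a \<Rightarrow> 'a \<Rightarrow> 'a \<Rightarrow> 'a" where
  "mirror_aut V E x y = (THE \<alpha>. graph_aut V E \<alpha> \<and>
      (\<forall>a b. Theta E a b x y \<longrightarrow> \<alpha> a = b \<and> \<alpha> b = a))"

definition mirror_auts :: "'a set \<Rightarrow> ('a \<Rightarrow> 'a \<Rightarrow> bool) \<Rightarrow> ('a \<Rightarrow> 'a) set" where
  "mirror_auts V E = {mirror_aut V E x y | x y. E x y}"

definition mirror_group :: "'a set \<Rightarrow> ('a \<Rightarrow> 'a \<Rightarrow> bool) \<Rightarrow> ('a \<Rightarrow> 'a) set" where
  "mirror_group V E = generate (BijGroup V) (mirror_auts V E)"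

definition cayley_adj :: "('g, 'm) monoid_scheme \<Rightarrow> 'g set \<Rightarrow> 'g \<Rightarrow> 'g \<Rightarrow> bool" where
  "cayley_adj G S b1 b2 \<longleftrightarrow> (\<exists>s\<in>S. b1 = s \<otimes>\<^bsub>G\<^esub> b2)"

definition graph_iso :: "'a set \<Rightarrow> ('a \<Rightarrow> 'a \<Rightarrow> bool) \<Rightarrow> 'b set \<Rightarrow> ('b \<Rightarrow> 'b \<Rightarrow> bool) \<Rightarrow> bool" where
  "graph_iso V E W F \<longleftrightarrow> (\<exists>\<phi>. bij_betw \<phi> V W \<and> (\<forall>x\<in>V. \<forall>y\<in>V. E x y \<longleftrightarrow> F (\<phi> x) (\<phi> y)))"

end

theory Submission
  imports Defs
begin

lemma rtp_sym:
  assumes "symp Q" "Q\<^sup>*\<^sup>* x y" shows "Q\<^sup>*\<^sup>* y x"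
  using assms(2)
proof induction
  case base then show ?case by simp
next
  case (step y z)
  then show ?case using assms(1) by (meson converse_rtranclp_into_rtranclp sympD)
qed

lemma rtp_cross:
  assumes "Q\<^sup>*\<^sup>* x y" "\<not> S\<^sup>*\<^sup>* x y"
  shows "\<exists>z z'. Q\<^sup>*\<^sup>* x z \<and> Q z z' \<and> \<not> S\<^sup>*\<^sup>* z z'"
  using assms
proof induction
  case base then show ?case by simp
next
  case (step y z)
  show ?case
  proof (cases "S\<^sup>*\<^sup>* x y")
    case True
    then have "\<not> S\<^sup>*\<^sup>* y z" using step.prems by (meson rtranclp_trans)
    then show ?thesis using step.hyps by blast
  next
    case False
    then show ?thesis using step.IH by blast
  qed
qed

lemma (in group) inv_cancel_assoc:
  "x \<in> carrier G \<Longrightarrow> y \<in> carrier G \<Longrightarrow> inv x \<otimes> (x \<otimes> y) = y"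
  "x \<in> carrier G \<Longrightarrow> y \<in> carrier G \<Longrightarrow> x \<otimes> (inv x \<otimes> y) = y"
  by (simp_all add: m_assoc[symmetric])

lemma (in group) gconj_mult:
  "p \<in> carrier G \<Longrightarrow> a \<in> carrier G \<Longrightarrow> b \<in> carrier G \<Longrightarrow>
   (p \<otimes> a \<otimes> inv p) \<otimes> (p \<otimes> b \<otimes> inv p) = p \<otimes> (a \<otimes> b) \<otimes> inv p"
  by (simp add: m_assoc inv_cancel_assoc)

lemma (in group) gconj_gen:
  "h \<in> carrier G \<Longrightarrow> w \<in> carrier G \<Longrightarrow> inv (h \<otimes> w \<otimes> inv h) \<otimes> h \<otimes> w = h"
  by (simp add: m_assoc inv_cancel_assoc inv_mult_group)

lemma (in group) gconj_prod:
  "p \<in> carrier G \<Longrightarrow> a \<in> carrier G \<Longrightarrow> (p \<otimes> a \<otimes> inv p) \<otimes> p = p \<otimes> a"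
  by (simp add: m_assoc)

lemma (in group) gconj_one:
  "p \<in> carrier G \<Longrightarrow> p \<otimes> \<one> \<otimes> inv p = \<one>"
  by simp

lemma (in group) greduce:
  "w2 \<in> carrier G \<Longrightarrow> a \<in> carrier G \<Longrightarrow> w1 \<in> carrier G \<Longrightarrow> inv a = a \<Longrightarrow>
   w2 \<otimes> (a \<otimes> w1 \<otimes> inv a) = w2 \<otimes> a \<otimes> w1 \<otimes> a"
  by (simp add: m_assoc)

lemma (in group) grev:
  "w \<in> carrier G \<Longrightarrow> a \<in> carrier G \<Longrightarrow> inv a = a \<Longrightarrow>
   \<one> \<otimes> a \<otimes> inv w = inv (w \<otimes> a)"
  by (simp add: inv_mult_group)

locale mg =
  fixes V :: "'a set" and E :: "'a \<Rightarrow> 'a \<Rightarrow> bool" and P :: "'a set set set"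
  assumes G: "finite_connected_simple_graph V E"
  and PU: "\<Union>P = edges E" and Pne: "{} \<notin> P"
  and Pdisj: "\<forall>F1\<in>P. \<forall>F2\<in>P. F1 \<noteq> F2 \<longrightarrow> F1 \<inter> F2 = {}"
  and Pmir: "\<forall>F\<in>P. \<exists>\<alpha>. graph_aut V E \<alpha> \<and> swaps_edges \<alpha> F \<and>
            (\<exists>C1 C2. C1 \<noteq> C2 \<and> components V (remove_edges E F) = {C1, C2} \<and>
                     \<alpha> ` C1 = C2 \<and> \<alpha> ` C2 = C1)"
begin

abbreviation "R F \<equiv> remove_edges E F"
abbreviation "d \<equiv> gdist E"

definition al :: "'a set set \<Rightarrow> 'a \<Rightarrow> 'a" where
  "al F = (SOME \<alpha>. graph_aut V E \<alpha> \<and> swaps_edges \<alpha> F \<and>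
            (\<exists>C1 C2. C1 \<noteq> C2 \<and> components V (remove_edges E F) = {C1, C2} \<and>
                     \<alpha> ` C1 = C2 \<and> \<alpha> ` C2 = C1))"

definition cls :: "'a \<Rightarrow> 'a \<Rightarrow> 'a set set" where
  "cls x y = (THE F. F \<in> P \<and> {x, y} \<in> F)"

lemma EV: "E x y \<Longrightarrow> x \<in> V \<and> y \<in> V"
  using G by (auto simp: finite_connected_simple_graph_def simple_graph_def)
lemma Esym: "E x y \<Longrightarrow> E y x"
  using G by (auto simp: finite_connected_simple_graph_def simple_graph_def)
lemma Eirr: "\<not> E x x"
  using G by (auto simp: finite_connected_simple_graph_def simple_graph_def)
lemma finV: "finite V"
  using G by (auto simp: finite_connected_simple_graph_def)
lemma conn: "x \<in> V \<Longrightarrow> y \<in> V \<Longrightarrow> E\<^sup>*\<^sup>* x y"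
  using G by (auto simp: finite_connected_simple_graph_def)

lemma edges_iff: "{x, y} \<in> edges E \<longleftrightarrow> E x y"
  unfolding edges_def by (auto simp: doubleton_eq_iff intro: Esym)

lemma inF_E: "F \<in> P \<Longrightarrow> {x, y} \<in> F \<Longrightarrow> E x y"
  using PU edges_iff by blast

lemma finP: "finite P"
proof -
  have "edges E \<subseteq> Pow V" unfolding edges_def using EV by auto
  then have "finite (edges E)" using finV finite_subset by blast
  then have "finite (\<Union>P)" using PU by simp
  then show ?thesis using finite_UnionD by blast
qed

lemma P_uniq: "F1 \<in> P \<Longrightarrow> F2 \<in> P \<Longrightarrow> e \<in> F1 \<Longrightarrow> e \<in> F2 \<Longrightarrow> F1 = F2"
  using Pdisj by blast

lemma cls: assumes "E x y" shows "cls x y \<in> P" "{x, y} \<in> cls x y"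
proof -
  have "{x,y} \<in> \<Union>P" using PU edges_iff assms by simp
  then obtain F where F: "F \<in> P" "{x,y} \<in> F" by blast
  have "cls x y = F" unfolding cls_def
    by (rule the_equality) (use F P_uniq in auto)
  then show "cls x y \<in> P" "{x, y} \<in> cls x y" using F by auto
qed

lemma cls_eq: "F \<in> P \<Longrightarrow> {x, y} \<in> F \<Longrightarrow> cls x y = F"
  using cls(1)[OF inF_E] cls(2)[OF inF_E] P_uniq by blast

lemma cls_sym: "cls x y = cls y x"
  unfolding cls_def by (simp add: insert_commute)

lemma R_iff: "R F x y \<longleftrightarrow> E x y \<and> {x, y} \<notin> F"
  by (simp add: remove_edges_def)

lemma R_symp: "symp (R F)"
  unfolding symp_def remove_edges_def by (auto simp: insert_commute intro: Esym)

lemma Rs_sym: "(R F)\<^sup>*\<^sup>* x y \<Longrightarrow> (R F)\<^sup>*\<^sup>* y x"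
  using rtp_sym[OF R_symp] .

lemma Rs_V: "(R F)\<^sup>*\<^sup>* x y \<Longrightarrow> x \<in> V \<Longrightarrow> y \<in> V"
  by (induction rule: rtranclp_induct) (auto simp: R_iff dest: EV)

lemma al: assumes "F \<in> P" shows "graph_aut V E (al F) \<and> swaps_edges (al F) F \<and>
            (\<exists>C1 C2. C1 \<noteq> C2 \<and> components V (R F) = {C1, C2} \<and>
                     al F ` C1 = C2 \<and> al F ` C2 = C1)"
  unfolding al_def by (rule someI_ex[OF bspec[OF Pmir assms]])

lemma al_aut: "F \<in> P \<Longrightarrow> graph_aut V E (al F)"
  using al by (rule conjunct1)

lemma al_swaps: "F \<in> P \<Longrightarrow> swaps_edges (al F) F"
  using al by (rule conjunct1[OF conjunct2])

lemma al_comps: "F \<in> P \<Longrightarrow> \<exists>C1 C2. C1 \<noteq> C2 \<and> components V (R F) = {C1, C2} \<and>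
                     al F ` C1 = C2 \<and> al F ` C2 = C1"
  using al by (rule conjunct2[OF conjunct2])

lemma al_swap: "F \<in> P \<Longrightarrow> {x, y} \<in> F \<Longrightarrow> al F x = y"
  using al_swaps unfolding swaps_edges_def by blast


definition comp :: "'a set set \<Rightarrow> 'a \<Rightarrow> 'a set" where
  "comp F u = {y\<in>V. (R F)\<^sup>*\<^sup>* u y}"

lemma comp_self: "u \<in> V \<Longrightarrow> u \<in> comp F u"
  by (simp add: comp_def)

lemma comp_eq: "(R F)\<^sup>*\<^sup>* u v \<Longrightarrow> comp F u = comp F v"
  unfolding comp_def using Rs_sym[of F u v] by (auto intro: rtranclp_trans)

lemma sides:
  assumes F: "F \<in> P"
  shows "{x, y} \<in> F \<Longrightarrow> \<not> (R F)\<^sup>*\<^sup>* x y"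
    and "x \<in> V \<Longrightarrow> y \<in> V \<Longrightarrow> u \<in> V \<Longrightarrow> \<not> (R F)\<^sup>*\<^sup>* x u \<Longrightarrow> \<not> (R F)\<^sup>*\<^sup>* y u \<Longrightarrow> (R F)\<^sup>*\<^sup>* x y"
    and "u \<in> V \<Longrightarrow> 2 * card (comp F u) = card V"
proof -
  obtain C1 C2 where C: "C1 \<noteq> C2" "components V (R F) = {C1, C2}" "al F ` C1 = C2" "al F ` C2 = C1"
    using al_comps[OF F] by (elim exE conjE)
  have K1: "comp F u = C1 \<or> comp F u = C2" if "u \<in> V" for u
  proof -
    have "comp F u \<in> components V (R F)" unfolding components_def comp_def
      using that by (intro CollectI exI[of _ u]) simp
    then show ?thesis using C(2) by auto
  qed
  have "C1 \<in> components V (R F)" "C2 \<in> components V (R F)" using C(2) by auto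
  then obtain a1 a2 where a: "a1 \<in> V" "C1 = comp F a1" "a2 \<in> V" "C2 = comp F a2"
    unfolding components_def comp_def by auto
  have K2: "C1 \<inter> C2 = {}"
  proof (rule ccontr)
    assume "C1 \<inter> C2 \<noteq> {}"
    then obtain z where "z \<in> C1" "z \<in> C2" by blast
    then have "(R F)\<^sup>*\<^sup>* a1 z" "(R F)\<^sup>*\<^sup>* a2 z" using a by (simp_all add: comp_def)
    then have "(R F)\<^sup>*\<^sup>* a1 a2" using Rs_sym[of F a2 z] by (auto intro: rtranclp_trans)
    then show False using comp_eq[of F a1 a2] a C(1) by simp
  qed
  have CV: "C1 \<subseteq> V" "C2 \<subseteq> V" using a by (auto simp: comp_def)
  show "\<not> (R F)\<^sup>*\<^sup>* x y" if xy: "{x, y} \<in> F"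
  proof
    assume r: "(R F)\<^sup>*\<^sup>* x y"
    have xV: "x \<in> V" using EV inF_E[OF F xy] by blast
    have ax: "al F x = y" using al_swap[OF F xy] .
    have "y \<in> comp F x" using r Rs_V[OF r xV] by (simp add: comp_def)
    moreover have xin: "x \<in> comp F x" using comp_self xV .
    moreover have "y \<in> al F ` comp F x" using ax xin by (metis imageI)
    ultimately have "y \<in> al F ` comp F x \<inter> comp F x" by blast
    moreover have "al F ` comp F x \<inter> comp F x = {}"
    proof (cases "comp F x = C1")
      case True then show ?thesis using C(3) K2 by (simp add: Int_commute)
    next
      case False then have "comp F x = C2" using K1[OF xV] by blast
      then show ?thesis using C(4) K2 by simp
    qed
    ultimately show False by blast
  qed
  show "(R F)\<^sup>*\<^sup>* x y" if "x \<in> V" "y \<in> V" "u \<in> V" "\<not> (R F)\<^sup>*\<^sup>* x u" "\<not> (R F)\<^sup>*\<^sup>* y u"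
  proof -
    have "comp F x \<noteq> comp F u"
    proof
      assume "comp F x = comp F u"
      then have "u \<in> comp F x" using comp_self[OF that(3)] by simp
      then show False using that(4) by (simp add: comp_def)
    qed
    moreover have "comp F y \<noteq> comp F u"
    proof
      assume "comp F y = comp F u"
      then have "u \<in> comp F y" using comp_self[OF that(3)] by simp
      then show False using that(5) by (simp add: comp_def)
    qed
    ultimately have "comp F x = comp F y" using K1[OF that(1)] K1[OF that(2)] K1[OF that(3)] by metis
    then have "y \<in> comp F x" using comp_self[OF that(2)] by simp
    then show ?thesis by (simp add: comp_def)
  qed
  show "2 * card (comp F u) = card V" if "u \<in> V"
  proof -
    have U: "C1 \<union> C2 = V" using CV K1 comp_self by blast
    have inj: "inj_on (al F) V" using al_aut[OF F]
      unfolding graph_aut_def Bij_def bij_betw_def by blast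
    have "card C2 = card C1" using C(3) card_image inj_on_subset[OF inj CV(1)] by blast
    moreover have "card (C1 \<union> C2) = card C1 + card C2"
      by (rule card_Un_disjoint) (use finV finite_subset CV K2 in auto)
    ultimately show ?thesis using K1[OF that] U by auto
  qed
qed

lemma aut_E: "graph_aut V E f \<Longrightarrow> E x y \<Longrightarrow> E (f x) (f y)"
  unfolding graph_aut_def using EV by blast

lemma aut_V: "graph_aut V E f \<Longrightarrow> x \<in> V \<Longrightarrow> f x \<in> V"
  unfolding graph_aut_def Bij_def bij_betw_def by blast

lemma aut_inj: "graph_aut V E f \<Longrightarrow> x \<in> V \<Longrightarrow> y \<in> V \<Longrightarrow> f x = f y \<Longrightarrow> x = y"
  unfolding graph_aut_def Bij_def bij_betw_def inj_on_def by blast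

lemma aut_surj: "graph_aut V E f \<Longrightarrow> y \<in> V \<Longrightarrow> \<exists>x\<in>V. f x = y"
proof -
  assume "graph_aut V E f" "y \<in> V"
  then have "f ` V = V" unfolding graph_aut_def Bij_def bij_betw_def by blast
  then show ?thesis using \<open>y \<in> V\<close> by (metis imageE)
qed

lemma aut_R:
  assumes "graph_aut V E g" "swaps_edges g F" "R F x y"
  shows "R F (g x) (g y)"
proof -
  have e: "E x y" "{x,y} \<notin> F" using assms(3) R_iff by auto
  have V: "x \<in> V" "y \<in> V" using EV e by auto
  have "{g x, g y} \<notin> F"
  proof
    assume h: "{g x, g y} \<in> F"
    then have "g (g x) = g y" "g (g y) = g x" using assms(2) unfolding swaps_edges_def
      by (auto simp: insert_commute)
    then have "g x = y" "g y = x" using aut_inj[OF assms(1)] aut_V[OF assms(1)] V by auto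
    then show False using h e(2) by (auto simp: insert_commute)
  qed
  then show ?thesis using aut_E[OF assms(1) e(1)] R_iff by auto
qed

lemma aut_Rs:
  assumes "graph_aut V E g" "swaps_edges g F" "(R F)\<^sup>*\<^sup>* x y"
  shows "(R F)\<^sup>*\<^sup>* (g x) (g y)"
  using assms(3) by induction (auto intro: rtranclp.rtrancl_into_rtrancl aut_R[OF assms(1,2)])

lemma F_edge: "F \<in> P \<Longrightarrow> \<exists>a b. {a, b} \<in> F"
proof -
  assume F: "F \<in> P"
  then obtain e where "e \<in> F" using Pne by (metis all_not_in_conv)
  then have "e \<in> edges E" using PU F by blast
  then show ?thesis using \<open>e \<in> F\<close> unfolding edges_def by blast
qed

lemma aut_side:
  assumes F: "F \<in> P" and g: "graph_aut V E g" "swaps_edges g F" and u: "u \<in> V"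
  shows "\<not> (R F)\<^sup>*\<^sup>* u (g u)"
proof
  assume h: "(R F)\<^sup>*\<^sup>* u (g u)"
  obtain a b where ab: "{a, b} \<in> F" using F_edge F by blast
  have gab: "g a = b" "g b = a" using g(2) ab unfolding swaps_edges_def by (auto simp: insert_commute)
  have abV: "a \<in> V" "b \<in> V" using inF_E[OF F ab] EV by auto
  have nab: "\<not> (R F)\<^sup>*\<^sup>* a b" "\<not> (R F)\<^sup>*\<^sup>* b a" using sides(1)[OF F] ab by (auto simp: insert_commute)
  show False
  proof (cases "(R F)\<^sup>*\<^sup>* a u")
    case True
    then have "(R F)\<^sup>*\<^sup>* b (g u)" using aut_Rs[OF g] gab by metis
    then show ?thesis using True h nab Rs_sym rtranclp_trans by metis
  next
    case False
    then have "(R F)\<^sup>*\<^sup>* b u" using sides(2)[OF F abV u] nab Rs_sym by metis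
    then have "(R F)\<^sup>*\<^sup>* a (g u)" using aut_Rs[OF g] gab by metis
    then show ?thesis using \<open>(R F)\<^sup>*\<^sup>* b u\<close> h nab Rs_sym rtranclp_trans by metis
  qed
qed

lemma aut_walk: "graph_aut V E f \<Longrightarrow> (E ^^ n) x y \<Longrightarrow> (E ^^ n) (f x) (f y)"
proof (induction n arbitrary: x)
  case 0 then show ?case by simp
next
  case (Suc n)
  then obtain z where "E x z" "(E ^^ n) z y" using relpowp_Suc_D2 by metis
  then show ?case using Suc aut_E relpowp_Suc_I2 by metis
qed

lemma aut_walk_rev: "graph_aut V E f \<Longrightarrow> x \<in> V \<Longrightarrow> y \<in> V \<Longrightarrow> (E ^^ n) (f x) (f y) \<Longrightarrow> (E ^^ n) x y"
proof (induction n arbitrary: x)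
  case 0 then show ?case using aut_inj by simp
next
  case (Suc n)
  then obtain z where z: "E (f x) z" "(E ^^ n) z (f y)" using relpowp_Suc_D2 by metis
  then obtain z' where z': "z' \<in> V" "f z' = z" using aut_surj Suc EV by metis
  have "E x z'" using Suc.prems z z' unfolding graph_aut_def by blast
  then show ?case using Suc z z' relpowp_Suc_I2 by metis
qed

lemma d_walk: "(E ^^ n) x y \<Longrightarrow> d x y \<le> n"
  unfolding gdist_def by (rule Least_le)

lemma d_ex: "x \<in> V \<Longrightarrow> y \<in> V \<Longrightarrow> (E ^^ (d x y)) x y"
  unfolding gdist_def using conn rtranclp_power by (metis LeastI_ex)

lemma d_aut: "graph_aut V E f \<Longrightarrow> x \<in> V \<Longrightarrow> y \<in> V \<Longrightarrow> d (f x) (f y) = d x y"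
  using d_walk d_ex aut_walk aut_walk_rev aut_V by (metis le_antisym)

lemma d_tri: "x \<in> V \<Longrightarrow> y \<in> V \<Longrightarrow> z \<in> V \<Longrightarrow> d x z \<le> d x y + d y z"
  using d_ex d_walk relpowp_trans by metis

lemma d_edge: "E x y \<Longrightarrow> d x y \<le> 1"
proof -
  assume "E x y"
  then have "(E ^^ 1) x y" by (simp only: relpowp_1)
  then show ?thesis by (rule d_walk)
qed

lemma d0: "x \<in> V \<Longrightarrow> y \<in> V \<Longrightarrow> d x y = 0 \<Longrightarrow> x = y"
  using d_ex by fastforce

lemma decomp:
  "(E ^^ m) x w \<Longrightarrow> \<not> (R F)\<^sup>*\<^sup>* x w \<Longrightarrow>
     \<exists>p q a b. p + 1 + q = m \<and> (E ^^ p) x a \<and> {a, b} \<in> F \<and> (E ^^ q) b w"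
proof (induction m arbitrary: x)
  case 0 then show ?case by simp
next
  case (Suc m)
  then obtain x1 where x1: "E x x1" "(E ^^ m) x1 w" using relpowp_Suc_D2 by metis
  show ?case
  proof (cases "{x, x1} \<in> F")
    case True
    then show ?thesis using x1 by (intro exI[of _ 0] exI[of _ m]) auto
  next
    case False
    then have "R F x x1" using x1 R_iff by auto
    then have "\<not> (R F)\<^sup>*\<^sup>* x1 w" using Suc.prems(2) converse_rtranclp_into_rtranclp by metis
    then obtain p q a b where "p + 1 + q = m" "(E ^^ p) x1 a" "{a, b} \<in> F" "(E ^^ q) b w"
      using Suc.IH x1 by blast
    then show ?thesis using x1 relpowp_Suc_I2[of E x x1 p a]
      by (intro exI[of _ "Suc p"] exI[of _ q]) auto
  qed
qed


definition sd :: "'a \<Rightarrow> 'a \<Rightarrow> nat" where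
  "sd u w = card {F\<in>P. \<not> (R F)\<^sup>*\<^sup>* u w}"

definition ind :: "'a set set \<Rightarrow> 'a \<Rightarrow> 'a \<Rightarrow> nat" where
  "ind F u w = (if (R F)\<^sup>*\<^sup>* u w then 0 else 1)"

lemma Rtr: "(R F)\<^sup>*\<^sup>* x y \<Longrightarrow> (R F)\<^sup>*\<^sup>* y z \<Longrightarrow> (R F)\<^sup>*\<^sup>* x z"
  by (rule rtranclp_trans)

lemma R_other: "F \<in> P \<Longrightarrow> E a b \<Longrightarrow> F \<noteq> cls a b \<Longrightarrow> R F a b"
  using cls[of a b] P_uniq[of F "cls a b" "{a,b}"] R_iff by blast

lemma Rs_edge1: "R F a b \<Longrightarrow> (R F)\<^sup>*\<^sup>* a w \<longleftrightarrow> (R F)\<^sup>*\<^sup>* b w"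
proof
  assume "R F a b" "(R F)\<^sup>*\<^sup>* a w"
  then have "R F b a" using R_symp by (metis sympD)
  then show "(R F)\<^sup>*\<^sup>* b w" using \<open>(R F)\<^sup>*\<^sup>* a w\<close> by (rule converse_rtranclp_into_rtranclp)
next
  assume "R F a b" "(R F)\<^sup>*\<^sup>* b w"
  then show "(R F)\<^sup>*\<^sup>* a w" by (rule converse_rtranclp_into_rtranclp)
qed

lemma Rs_edge2: "R F a b \<Longrightarrow> (R F)\<^sup>*\<^sup>* w a \<longleftrightarrow> (R F)\<^sup>*\<^sup>* w b"
  using Rs_edge1 Rs_sym by metis

lemma sd_lower: "(E ^^ n) u w \<Longrightarrow> sd u w \<le> n"
proof (induction n arbitrary: u)
  case 0 then show ?case by (simp add: sd_def)
next
  case (Suc n)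
  then obtain u1 where u1: "E u u1" "(E ^^ n) u1 w" using relpowp_Suc_D2 by metis
  have sub: "{F\<in>P. \<not> (R F)\<^sup>*\<^sup>* u w} \<subseteq> insert (cls u u1) {F\<in>P. \<not> (R F)\<^sup>*\<^sup>* u1 w}"
  proof
    fix F assume F: "F \<in> {F\<in>P. \<not> (R F)\<^sup>*\<^sup>* u w}"
    show "F \<in> insert (cls u u1) {F\<in>P. \<not> (R F)\<^sup>*\<^sup>* u1 w}"
    proof (cases "F = cls u u1")
      case False
      then have "R F u u1" using R_other F u1(1) by blast
      then show ?thesis using F Rs_edge1 by blast
    qed simp
  qed
  have fin: "finite {F\<in>P. \<not> (R F)\<^sup>*\<^sup>* u1 w}" using finP by simp
  have "sd u w \<le> card (insert (cls u u1) {F\<in>P. \<not> (R F)\<^sup>*\<^sup>* u1 w})"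
    unfolding sd_def by (rule card_mono) (use fin sub in auto)
  also have "\<dots> \<le> Suc (sd u1 w)" unfolding sd_def using fin by (simp add: card_insert_if)
  finally show ?case using Suc.IH[OF u1(2)] by simp
qed

lemma d_le_sd: "u \<in> V \<Longrightarrow> w \<in> V \<Longrightarrow> d u w \<le> sd u w"
proof (induction "d u w" arbitrary: u rule: less_induct)
  case less
  show ?case
  proof (cases "d u w")
    case 0 then show ?thesis by simp
  next
    case (Suc m)
    have "(E ^^ Suc m) u w" using d_ex[OF less.prems] Suc by simp
    then obtain u1 where u1: "E u u1" "(E ^^ m) u1 w" using relpowp_Suc_D2 by metis
    define H where "H = cls u u1"
    have H: "H \<in> P" "{u, u1} \<in> H" using cls[OF u1(1)] H_def by auto
    have H': "{u1, u} \<in> H" using H(2) by (simp add: insert_commute)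
    have u1V: "u1 \<in> V" using EV u1(1) by blast
    have nuu1: "\<not> (R H)\<^sup>*\<^sup>* u u1" "\<not> (R H)\<^sup>*\<^sup>* u1 u"
      using sides(1)[OF H(1) H(2)] sides(1)[OF H(1) H'] by auto
    show ?thesis
    proof (cases "(R H)\<^sup>*\<^sup>* u w")
      case True
      have "\<not> (R H)\<^sup>*\<^sup>* u1 w"
      proof
        assume "(R H)\<^sup>*\<^sup>* u1 w"
        then have "(R H)\<^sup>*\<^sup>* w u1" by (rule Rs_sym)
        then show False using True nuu1 Rtr by blast
      qed
      then obtain p q a b where pq: "p + 1 + q = m" "(E ^^ p) u1 a" "{a, b} \<in> H" "(E ^^ q) b w"
        using decomp[OF u1(2)] by blast
      have sw: "al H u1 = u" "al H a = b" using al_swap[OF H(1)] H' pq(3) by auto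
      have "(E ^^ p) u b" using aut_walk[OF al_aut[OF H(1)] pq(2)] sw by simp
      then have "(E ^^ (p + q)) u w" using pq(4) by (rule relpowp_trans)
      then have "d u w \<le> p + q" by (rule d_walk)
      then show ?thesis using Suc pq(1) by simp
    next
      case False
      have eqset: "{F\<in>P. \<not> (R F)\<^sup>*\<^sup>* u1 w} = {F\<in>P. \<not> (R F)\<^sup>*\<^sup>* u w} - {H}"
      proof (rule Set.set_eqI)
        fix F
        show "F \<in> {F\<in>P. \<not> (R F)\<^sup>*\<^sup>* u1 w} \<longleftrightarrow> F \<in> {F\<in>P. \<not> (R F)\<^sup>*\<^sup>* u w} - {H}"
        proof (cases "F = H")
          case True
          have "\<not> (R H)\<^sup>*\<^sup>* w u" using False Rs_sym by blast
          then have "(R H)\<^sup>*\<^sup>* u1 w" using sides(2)[OF H(1) u1V less.prems(2) less.prems(1)] nuu1 by blast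
          then show ?thesis using True by simp
        next
          case False
          show ?thesis
          proof (cases "F \<in> P")
            case True
            then have "R F u u1" using R_other u1(1) False H_def by blast
            then show ?thesis using Rs_edge1[of F u u1 w] False by auto
          qed simp
        qed
      qed
      have Hin: "H \<in> {F\<in>P. \<not> (R F)\<^sup>*\<^sup>* u w}" using H(1) False by simp
      have fin: "finite {F\<in>P. \<not> (R F)\<^sup>*\<^sup>* u w}" using finP by simp
      have c1: "sd u1 w = sd u w - 1" unfolding sd_def eqset using Hin fin by simp
      have c2: "sd u w \<ge> 1" unfolding sd_def using Hin fin
        by (metis One_nat_def Suc_leI card_gt_0_iff empty_iff)
      have "d u1 w \<le> m" using u1(2) by (rule d_walk)
      then have "d u1 w < d u w" using Suc by simp
      then have IH: "d u1 w \<le> sd u1 w" using less.hyps u1V less.prems(2) by blast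
      have "(E ^^ Suc (d u1 w)) u w" using relpowp_Suc_I2[OF u1(1) d_ex[OF u1V less.prems(2)]] .
      then have "d u w \<le> Suc (d u1 w)" by (rule d_walk)
      then show ?thesis using IH c1 c2 by simp
    qed
  qed
qed

lemma d_sd: "u \<in> V \<Longrightarrow> w \<in> V \<Longrightarrow> d u w = sd u w"
  using d_le_sd sd_lower[OF d_ex] by (meson le_antisym)

lemma sd_sum: "sd u w = (\<Sum>F\<in>P. ind F u w)"
proof -
  have "sd u w = (\<Sum>F\<in>{F\<in>P. \<not> (R F)\<^sup>*\<^sup>* u w}. 1)" unfolding sd_def by simp
  also have "\<dots> = (\<Sum>F\<in>P. if \<not> (R F)\<^sup>*\<^sup>* u w then 1 else 0)"
    using finP by (rule sum.inter_filter)
  also have "\<dots> = (\<Sum>F\<in>P. ind F u w)" unfolding ind_def by (intro sum.cong) auto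
  finally show ?thesis .
qed

lemma d_sum: "u \<in> V \<Longrightarrow> w \<in> V \<Longrightarrow> d u w = (\<Sum>F\<in>P. ind F u w)"
  using d_sd sd_sum by simp

lemma Theta_iff:
  assumes ab: "E a b" and xy: "E x y"
  shows "Theta E a b x y \<longleftrightarrow> cls a b = cls x y"
proof -
  have V: "a \<in> V" "b \<in> V" "x \<in> V" "y \<in> V" using EV ab xy by auto
  have L: "d a x + d b y = (\<Sum>F\<in>P. ind F a x + ind F b y)"
    using V by (simp add: d_sum sum.distrib)
  have Rr: "d a y + d b x = (\<Sum>F\<in>P. ind F a y + ind F b x)"
    using V by (simp add: d_sum sum.distrib)
  have term_eq: "ind F a x + ind F b y = ind F a y + ind F b x"
    if F: "F \<in> P" "F \<noteq> cls a b \<or> F \<noteq> cls x y" for F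
  proof (cases "F = cls a b")
    case False
    then have "R F a b" using R_other F ab by blast
    then have "ind F a t = ind F b t" for t unfolding ind_def using Rs_edge1 by simp
    then show ?thesis by simp
  next
    case True
    then have "F \<noteq> cls x y" using F by blast
    then have "R F x y" using R_other F xy by blast
    then have "ind F t x = ind F t y" for t unfolding ind_def using Rs_edge2 by simp
    then show ?thesis by simp
  qed
  show ?thesis
  proof
    assume "cls a b = cls x y"
    define F0 where "F0 = cls a b"
    have F0: "F0 \<in> P" "{a,b} \<in> F0" "{x,y} \<in> F0" using cls ab xy F0_def \<open>cls a b = cls x y\<close> by auto
    have nab: "\<not> (R F0)\<^sup>*\<^sup>* a b" "\<not> (R F0)\<^sup>*\<^sup>* b a" "\<not> (R F0)\<^sup>*\<^sup>* x y" "\<not> (R F0)\<^sup>*\<^sup>* y x"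
      using sides(1)[OF F0(1)] F0 by (auto simp: insert_commute)
    have t0: "ind F0 a x + ind F0 b y \<noteq> ind F0 a y + ind F0 b x"
    proof (cases "(R F0)\<^sup>*\<^sup>* a x")
      case True
      have "\<not> (R F0)\<^sup>*\<^sup>* y a"
      proof
        assume "(R F0)\<^sup>*\<^sup>* y a"
        then have "(R F0)\<^sup>*\<^sup>* y x" using True Rtr by blast
        then show False using nab by blast
      qed
      then have by_: "(R F0)\<^sup>*\<^sup>* b y" using sides(2)[OF F0(1) V(2) V(4) V(1)] nab by blast
      have "\<not> (R F0)\<^sup>*\<^sup>* a y"
      proof
        assume "(R F0)\<^sup>*\<^sup>* a y"
        then have "(R F0)\<^sup>*\<^sup>* x y" using True Rs_sym Rtr by blast
        then show False using nab by blast
      qed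
      moreover have "\<not> (R F0)\<^sup>*\<^sup>* b x"
      proof
        assume "(R F0)\<^sup>*\<^sup>* b x"
        then have "(R F0)\<^sup>*\<^sup>* b a" using True Rs_sym Rtr by blast
        then show False using nab by blast
      qed
      ultimately show ?thesis using True by_ by (simp add: ind_def)
    next
      case False
      have "\<not> (R F0)\<^sup>*\<^sup>* x a" using False Rs_sym by blast
      then have bx: "(R F0)\<^sup>*\<^sup>* b x" using sides(2)[OF F0(1) V(2) V(3) V(1)] nab by blast
      have ay: "(R F0)\<^sup>*\<^sup>* a y" using sides(2)[OF F0(1) V(1) V(4) V(3)] nab False by blast
      have "\<not> (R F0)\<^sup>*\<^sup>* b y"
      proof
        assume "(R F0)\<^sup>*\<^sup>* b y"
        then have "(R F0)\<^sup>*\<^sup>* a b" using ay Rs_sym Rtr by blast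
        then show False using nab by blast
      qed
      then show ?thesis using False bx ay by (simp add: ind_def)
    qed
    have sL: "(\<Sum>F\<in>P. ind F a x + ind F b y) = (ind F0 a x + ind F0 b y) + (\<Sum>F\<in>P-{F0}. ind F a x + ind F b y)"
      using finP F0(1) by (rule sum.remove)
    have sR: "(\<Sum>F\<in>P. ind F a y + ind F b x) = (ind F0 a y + ind F0 b x) + (\<Sum>F\<in>P-{F0}. ind F a y + ind F b x)"
      using finP F0(1) by (rule sum.remove)
    have "(\<Sum>F\<in>P-{F0}. ind F a x + ind F b y) = (\<Sum>F\<in>P-{F0}. ind F a y + ind F b x)"
      by (rule sum.cong) (use term_eq F0_def in auto)
    then have "d a x + d b y \<noteq> d a y + d b x" using L Rr sL sR t0 by simp
    then show "Theta E a b x y" using ab xy by (simp add: Theta_def)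
  next
    assume th: "Theta E a b x y"
    show "cls a b = cls x y"
    proof (rule ccontr)
      assume ne: "cls a b \<noteq> cls x y"
      have "(\<Sum>F\<in>P. ind F a x + ind F b y) = (\<Sum>F\<in>P. ind F a y + ind F b x)"
        by (rule sum.cong) (use term_eq ne in auto)
      then show False using th L Rr by (simp add: Theta_def)
    qed
  qed
qed


lemma same_cut:
  assumes F: "F \<in> P" and H: "H \<in> P" and u: "u \<in> V"
    and cut: "\<forall>y\<in>V. ((R F)\<^sup>*\<^sup>* u y) = (((R H)\<^sup>*\<^sup>* x y) = c)"
  shows "F = H"
proof -
  obtain p q where pq: "{p, q} \<in> F" using F_edge F by blast
  have V: "p \<in> V" "q \<in> V" using inF_E[OF F pq] EV by auto
  have npq: "\<not> (R F)\<^sup>*\<^sup>* p q" using sides(1)[OF F pq] .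
  have diff: "(R F)\<^sup>*\<^sup>* u p \<noteq> (R F)\<^sup>*\<^sup>* u q"
  proof
    assume eq: "(R F)\<^sup>*\<^sup>* u p = (R F)\<^sup>*\<^sup>* u q"
    show False
    proof (cases "(R F)\<^sup>*\<^sup>* u p")
      case True
      then have "(R F)\<^sup>*\<^sup>* p q" using eq Rs_sym Rtr by metis
      then show False using npq by blast
    next
      case False
      then have "\<not> (R F)\<^sup>*\<^sup>* p u" "\<not> (R F)\<^sup>*\<^sup>* q u" using eq Rs_sym by metis+
      then have "(R F)\<^sup>*\<^sup>* p q" using sides(2)[OF F V u] by blast
      then show False using npq by blast
    qed
  qed
  then have "(R H)\<^sup>*\<^sup>* x p \<noteq> (R H)\<^sup>*\<^sup>* x q" using cut V by auto
  then have "\<not> (R H)\<^sup>*\<^sup>* p q" using Rs_sym Rtr by metis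
  then have "{p, q} \<in> H" using inF_E[OF F pq] R_iff by blast
  then show ?thesis using P_uniq F H pq by blast
qed

lemma both_sides:
  assumes H: "H \<in> P" and F: "F \<in> P" and ne: "H \<noteq> F" and u: "u \<in> V" and x: "x \<in> V"
  shows "\<exists>z. (R F)\<^sup>*\<^sup>* u z \<and> (R H)\<^sup>*\<^sup>* x z" "\<exists>z. (R F)\<^sup>*\<^sup>* u z \<and> \<not> (R H)\<^sup>*\<^sup>* x z"
proof -
  have cF: "2 * card (comp F u) = card V" using sides(3)[OF F u] .
  have cH: "2 * card (comp H x) = card V" using sides(3)[OF H x] .
  have fin: "finite (comp F u)" "finite (comp H x)" using finV by (auto simp: comp_def)
  have subV: "comp F u \<subseteq> V" "comp H x \<subseteq> V" by (auto simp: comp_def)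
  show "\<exists>z. (R F)\<^sup>*\<^sup>* u z \<and> (R H)\<^sup>*\<^sup>* x z"
  proof (rule ccontr)
    assume no: "\<not> ?thesis"
    have sub: "comp H x \<subseteq> V - comp F u" using no by (auto simp: comp_def)
    have "card (V - comp F u) = card V - card (comp F u)"
      using subV fin by (simp add: card_Diff_subset)
    then have "card (comp H x) = card (V - comp F u)" using cF cH by simp
    then have eq: "comp H x = V - comp F u"
      using card_subset_eq[OF _ sub] finV by blast
    have "\<forall>y\<in>V. ((R F)\<^sup>*\<^sup>* u y) = (((R H)\<^sup>*\<^sup>* x y) = False)"
    proof
      fix y assume "y \<in> V"
      then show "((R F)\<^sup>*\<^sup>* u y) = (((R H)\<^sup>*\<^sup>* x y) = False)"
        using eq unfolding comp_def by blast
    qed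
    then show False using same_cut[OF F H u] ne by metis
  qed
  show "\<exists>z. (R F)\<^sup>*\<^sup>* u z \<and> \<not> (R H)\<^sup>*\<^sup>* x z"
  proof (rule ccontr)
    assume no: "\<not> ?thesis"
    have sub: "comp F u \<subseteq> comp H x" using no by (auto simp: comp_def)
    have "card (comp F u) = card (comp H x)" using cF cH by simp
    then have eq: "comp F u = comp H x"
      using card_subset_eq[OF _ sub] fin by blast
    have "\<forall>y\<in>V. ((R F)\<^sup>*\<^sup>* u y) = (((R H)\<^sup>*\<^sup>* x y) = True)"
    proof
      fix y assume "y \<in> V"
      then show "((R F)\<^sup>*\<^sup>* u y) = (((R H)\<^sup>*\<^sup>* x y) = True)"
        using eq unfolding comp_def by blast
    qed
    then show False using same_cut[OF F H u] ne by metis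
  qed
qed

lemma equid:
  assumes F: "F \<in> P" and g1: "graph_aut V E g1" "swaps_edges g1 F"
    and g2: "graph_aut V E g2" "swaps_edges g2 F" and u: "u \<in> V" and z: "(R F)\<^sup>*\<^sup>* u z"
  shows "d z (g1 u) \<le> d z (g2 u)"
proof -
  have zV: "z \<in> V" using Rs_V z u by blast
  have g2u: "g2 u \<in> V" "g1 u \<in> V" using aut_V g1 g2 u by auto
  have nz: "\<not> (R F)\<^sup>*\<^sup>* z (g2 u)"
  proof
    assume "(R F)\<^sup>*\<^sup>* z (g2 u)"
    then have "(R F)\<^sup>*\<^sup>* u (g2 u)" using z Rtr by blast
    then show False using aut_side[OF F g2 u] by blast
  qed
  obtain p q a b where pq: "p + 1 + q = d z (g2 u)" "(E ^^ p) z a" "{a, b} \<in> F" "(E ^^ q) b (g2 u)"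
    using decomp[OF d_ex[OF zV g2u(1)] nz] by blast
  have ab: "E a b" "a \<in> V" "b \<in> V" using inF_E[OF F pq(3)] EV by auto
  have s: "g1 a = b" "g2 a = b" using g1(2) g2(2) pq(3) unfolding swaps_edges_def by auto
  have "d b (g1 u) = d a u" using d_aut[OF g1(1) ab(2) u] s by simp
  also have "\<dots> = d b (g2 u)" using d_aut[OF g2(1) ab(2) u] s by simp
  also have "\<dots> \<le> q" using pq(4) by (rule d_walk)
  finally have 1: "d b (g1 u) \<le> q" .
  have 2: "d z a \<le> p" using pq(2) by (rule d_walk)
  have 3: "d a b \<le> 1" using ab(1) by (rule d_edge)
  have "d z (g1 u) \<le> d z a + d a (g1 u)" using d_tri zV ab(2) g2u(2) by blast
  also have "d a (g1 u) \<le> d a b + d b (g1 u)" using d_tri ab g2u(2) by blast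
  finally show ?thesis using 1 2 3 pq(1) by simp
qed

lemma uniq:
  assumes F: "F \<in> P" and g: "graph_aut V E g" "swaps_edges g F"
  shows "g = al F"
proof (rule extensionalityI)
  show "g \<in> extensional V" "al F \<in> extensional V"
    using g(1) al_aut[OF F] unfolding graph_aut_def Bij_def by auto
  fix u assume u: "u \<in> V"
  show "g u = al F u"
  proof (rule ccontr)
    assume ne: "g u \<noteq> al F u"
    define w1 where "w1 = al F u"
    define w2 where "w2 = g u"
    have a: "graph_aut V E (al F)" "swaps_edges (al F) F" using al_aut al_swaps F by auto
    have wV: "w1 \<in> V" "w2 \<in> V" using aut_V a g u w1_def w2_def by auto
    have "\<not> (R F)\<^sup>*\<^sup>* w1 u" "\<not> (R F)\<^sup>*\<^sup>* w2 u"
      using aut_side[OF F a u] aut_side[OF F g u] Rs_sym w1_def w2_def by blast+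
    then have w12: "(R F)\<^sup>*\<^sup>* w1 w2" using sides(2)[OF F wV u] by blast
    have eqd: "d z w1 = d z w2" if "(R F)\<^sup>*\<^sup>* u z" for z
      using equid[OF F a g u that] equid[OF F g a u that] w1_def w2_def by simp
    have "w1 \<noteq> w2" using ne w1_def w2_def by simp
    then have "d w1 w2 \<noteq> 0" using d0[OF wV] by blast
    then have "sd w1 w2 \<noteq> 0" using d_sd wV by simp
    then have "{F\<in>P. \<not> (R F)\<^sup>*\<^sup>* w1 w2} \<noteq> {}" unfolding sd_def by force
    then obtain H where H: "H \<in> P" "\<not> (R H)\<^sup>*\<^sup>* w1 w2" by blast
    have HF: "H \<noteq> F" using H w12 by blast
    obtain z1 where z1: "(R F)\<^sup>*\<^sup>* u z1" "(R H)\<^sup>*\<^sup>* w1 z1" using both_sides(1)[OF H(1) F HF u wV(1)] by blast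
    obtain z2 where z2: "(R F)\<^sup>*\<^sup>* u z2" "\<not> (R H)\<^sup>*\<^sup>* w1 z2" using both_sides(2)[OF H(1) F HF u wV(1)] by blast
    have "(R F)\<^sup>*\<^sup>* z1 u" using z1(1) by (rule Rs_sym)
    then have c1: "(R F)\<^sup>*\<^sup>* z1 z2" using z2(1) by (rule Rtr)
    have c2: "\<not> (R H)\<^sup>*\<^sup>* z1 z2"
    proof
      assume "(R H)\<^sup>*\<^sup>* z1 z2"
      with z1(2) have "(R H)\<^sup>*\<^sup>* w1 z2" by (rule Rtr)
      with z2(2) show False by blast
    qed
    obtain z z' where zz: "(R F)\<^sup>*\<^sup>* z1 z" "R F z z'" "\<not> (R H)\<^sup>*\<^sup>* z z'"
      using rtp_cross[OF c1 c2] by blast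
    have Ezz: "E z z'" using zz(2) R_iff by blast
    have zV: "z \<in> V" "z' \<in> V" using EV Ezz by auto
    have zH: "{z, z'} \<in> H"
    proof (rule ccontr)
      assume "{z, z'} \<notin> H"
      then have "R H z z'" using Ezz R_iff by blast
      then show False using zz(3) by blast
    qed
    have uz1: "(R F)\<^sup>*\<^sup>* u z" using z1(1) zz(1) by (rule Rtr)
    have uz: "(R F)\<^sup>*\<^sup>* u z" "(R F)\<^sup>*\<^sup>* u z'" using uz1 rtranclp.rtrancl_into_rtrancl[OF uz1 zz(2)] by auto
    have oth: "ind K z' t = ind K z t" if "K \<in> P - {H}" for K t
    proof -
      have "cls z z' = H" using cls_eq H(1) zH by blast
      then have "R K z z'" using R_other[of K z z'] that Ezz by auto
      then show ?thesis unfolding ind_def using Rs_edge1[of K z z' t] by simp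
    qed
    have flip: "ind H z' t = 1 - ind H z t" if "t \<in> V" for t
    proof (cases "(R H)\<^sup>*\<^sup>* z t")
      case True
      have "\<not> (R H)\<^sup>*\<^sup>* z' t"
      proof
        assume "(R H)\<^sup>*\<^sup>* z' t"
        then have "(R H)\<^sup>*\<^sup>* t z'" by (rule Rs_sym)
        with True have "(R H)\<^sup>*\<^sup>* z z'" by (rule Rtr)
        with zz(3) show False by blast
      qed
      then show ?thesis using True by (simp add: ind_def)
    next
      case False
      have "(R H)\<^sup>*\<^sup>* z' t"
      proof (rule ccontr)
        assume "\<not> (R H)\<^sup>*\<^sup>* z' t"
        then have "(R H)\<^sup>*\<^sup>* z z'" using sides(2)[OF H(1) zV that] False by blast
        then show False using zz(3) by blast
      qed
      then show ?thesis using False by (simp add: ind_def)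
    qed
    have hdiff: "ind H z w1 \<noteq> ind H z w2"
    proof (cases "(R H)\<^sup>*\<^sup>* z w1")
      case True
      have "\<not> (R H)\<^sup>*\<^sup>* z w2"
      proof
        assume "(R H)\<^sup>*\<^sup>* z w2"
        have "(R H)\<^sup>*\<^sup>* w1 z" using True by (rule Rs_sym)
        then have "(R H)\<^sup>*\<^sup>* w1 w2" using \<open>(R H)\<^sup>*\<^sup>* z w2\<close> by (rule Rtr)
        with H(2) show False by blast
      qed
      then show ?thesis using True by (simp add: ind_def)
    next
      case False
      have "(R H)\<^sup>*\<^sup>* z w2"
      proof (rule ccontr)
        assume "\<not> (R H)\<^sup>*\<^sup>* z w2"
        moreover have "\<not> (R H)\<^sup>*\<^sup>* w1 z" using False Rs_sym by blast
        ultimately have "(R H)\<^sup>*\<^sup>* w1 w2" using sides(2)[OF H(1) wV zV(1)] Rs_sym by blast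
        then show False using H(2) by blast
      qed
      then show ?thesis using False by (simp add: ind_def)
    qed
    define S where "S t = (\<Sum>K\<in>P-{H}. ind K z t)" for t
    have sz: "d z t = ind H z t + S t" if "t \<in> V" for t
      using d_sum[OF zV(1) that] sum.remove[OF finP H(1)] S_def by simp
    have sz': "d z' t = ind H z' t + S t" if "t \<in> V" for t
    proof -
      have "d z' t = ind H z' t + (\<Sum>K\<in>P-{H}. ind K z' t)"
        using d_sum[OF zV(2) that] sum.remove[OF finP H(1)] by simp
      also have "(\<Sum>K\<in>P-{H}. ind K z' t) = S t" unfolding S_def by (rule sum.cong) (use oth in auto)
      finally show ?thesis .
    qed
    have e1: "ind H z w1 + S w1 = ind H z w2 + S w2" using eqd[OF uz(1)] sz wV by simp
    have e2: "(1 - ind H z w1) + S w1 = (1 - ind H z w2) + S w2"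
      using eqd[OF uz(2)] sz' flip wV by simp
    have b: "ind H z w1 \<le> 1" "ind H z w2 \<le> 1" by (auto simp: ind_def)
    show False using e1 e2 b hdiff by linarith
  qed
qed

lemma maut:
  assumes xy: "E x y"
  shows "mirror_aut V E x y = al (cls x y)"
  unfolding mirror_aut_def
proof (rule the_equality)
  define F where "F = cls x y"
  have F: "F \<in> P" "{x, y} \<in> F" using cls[OF xy] F_def by auto
  show "graph_aut V E (al (cls x y)) \<and> (\<forall>a b. Theta E a b x y \<longrightarrow> al (cls x y) a = b \<and> al (cls x y) b = a)"
  proof (intro conjI allI impI)
    show "graph_aut V E (al (cls x y))" using al_aut F F_def by simp
    fix a b assume th: "Theta E a b x y"
    then have ab: "E a b" by (simp add: Theta_def)
    then have "cls a b = cls x y" using Theta_iff xy th by blast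
    then have "{a, b} \<in> F" "{b, a} \<in> F" using cls[OF ab] F_def by (auto simp: insert_commute)
    then show "al (cls x y) a = b" "al (cls x y) b = a" using al_swap F(1) F_def by auto
  qed
  fix \<beta> assume b: "graph_aut V E \<beta> \<and> (\<forall>a b. Theta E a b x y \<longrightarrow> \<beta> a = b \<and> \<beta> b = a)"
  have "swaps_edges \<beta> F"
    unfolding swaps_edges_def
  proof (intro allI impI)
    fix a b assume ab: "{a, b} \<in> F"
    then have Eab: "E a b" using inF_E F(1) by blast
    have "cls a b = cls x y" using cls_eq[OF F(1) ab] F_def by simp
    then have "Theta E a b x y" using Theta_iff[OF Eab xy] by simp
    then show "\<beta> a = b" using b by blast
  qed
  then show "\<beta> = al (cls x y)" using uniq F(1) b F_def by blast
qed


abbreviation "BG \<equiv> BijGroup V"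
abbreviation "m \<equiv> mirror_aut V E"

lemma BG: "group BG" by (rule group_BijGroup)

lemma carrier_BG: "carrier BG = Bij V"
  by (simp add: BijGroup_def)

lemma aut_Bij: "graph_aut V E f \<Longrightarrow> f \<in> carrier BG"
  by (simp add: graph_aut_def BijGroup_def)

lemma mult_apply: "f \<in> carrier BG \<Longrightarrow> g \<in> carrier BG \<Longrightarrow> x \<in> V \<Longrightarrow> (f \<otimes>\<^bsub>BG\<^esub> g) x = f (g x)"
  by (simp add: BijGroup_def compose_def)

lemma one_apply: "x \<in> V \<Longrightarrow> \<one>\<^bsub>BG\<^esub> x = x"
  by (simp add: BijGroup_def)

lemma Bij_V: "f \<in> carrier BG \<Longrightarrow> x \<in> V \<Longrightarrow> f x \<in> V"
  by (auto simp: BijGroup_def Bij_def bij_betw_def)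

lemma inv_apply: "f \<in> carrier BG \<Longrightarrow> x \<in> V \<Longrightarrow> f ((inv\<^bsub>BG\<^esub> f) x) = x \<and> (inv\<^bsub>BG\<^esub> f) (f x) = x"
proof -
  assume f: "f \<in> carrier BG" and x: "x \<in> V"
  have i: "inv\<^bsub>BG\<^esub> f \<in> carrier BG" using group.inv_closed[OF BG f] .
  have "(f \<otimes>\<^bsub>BG\<^esub> inv\<^bsub>BG\<^esub> f) x = x" using group.r_inv[OF BG f] one_apply x by simp
  moreover have "(inv\<^bsub>BG\<^esub> f \<otimes>\<^bsub>BG\<^esub> f) x = x" using group.l_inv[OF BG f] one_apply x by simp
  ultimately show ?thesis using mult_apply f i x by simp
qed

lemma aut_mult: "graph_aut V E f \<Longrightarrow> graph_aut V E g \<Longrightarrow> graph_aut V E (f \<otimes>\<^bsub>BG\<^esub> g)"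
proof -
  assume f: "graph_aut V E f" and g: "graph_aut V E g"
  have c: "f \<otimes>\<^bsub>BG\<^esub> g \<in> carrier BG" using monoid.m_closed[OF group.is_monoid[OF BG] aut_Bij[OF f] aut_Bij[OF g]] .
  show ?thesis unfolding graph_aut_def
  proof (intro conjI ballI)
    show "f \<otimes>\<^bsub>BG\<^esub> g \<in> Bij V" using c unfolding carrier_BG .
    fix x y assume "x \<in> V" "y \<in> V"
    then have gV: "g x \<in> V" "g y \<in> V" using aut_V[OF g] by auto
    have "E x y = E (g x) (g y)" using g \<open>x \<in> V\<close> \<open>y \<in> V\<close> unfolding graph_aut_def by blast
    also have "\<dots> = E (f (g x)) (f (g y))" using f gV unfolding graph_aut_def by blast
    finally show "E x y = E ((f \<otimes>\<^bsub>BG\<^esub> g) x) ((f \<otimes>\<^bsub>BG\<^esub> g) y)"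
      using mult_apply[OF aut_Bij[OF f] aut_Bij[OF g]] \<open>x \<in> V\<close> \<open>y \<in> V\<close> by simp
  qed
qed

lemma aut_inv: "graph_aut V E f \<Longrightarrow> graph_aut V E (inv\<^bsub>BG\<^esub> f)"
proof -
  assume f: "graph_aut V E f"
  have fc: "f \<in> carrier BG" using aut_Bij[OF f] .
  have c: "inv\<^bsub>BG\<^esub> f \<in> carrier BG" using group.inv_closed[OF BG fc] .
  show ?thesis unfolding graph_aut_def
  proof (intro conjI ballI)
    show "inv\<^bsub>BG\<^esub> f \<in> Bij V" using c unfolding carrier_BG .
    fix x y assume xy: "x \<in> V" "y \<in> V"
    have fE: "E a b = E (f a) (f b)" if "a \<in> V" "b \<in> V" for a b using f that unfolding graph_aut_def by blast
    have "E ((inv\<^bsub>BG\<^esub> f) x) ((inv\<^bsub>BG\<^esub> f) y) = E (f ((inv\<^bsub>BG\<^esub> f) x)) (f ((inv\<^bsub>BG\<^esub> f) y))"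
      using fE[OF Bij_V[OF c xy(1)] Bij_V[OF c xy(2)]] .
    then show "E x y = E ((inv\<^bsub>BG\<^esub> f) x) ((inv\<^bsub>BG\<^esub> f) y)" using inv_apply[OF fc] xy by simp
  qed
qed

lemma m_props:
  assumes "E x y"
  shows "m x y = al (cls x y)" "graph_aut V E (m x y)" "m x y \<in> carrier BG"
    "m x y x = y" "m x y y = x" "m y x = m x y"
proof -
  show e: "m x y = al (cls x y)" using maut[OF assms] .
  show g: "graph_aut V E (m x y)" using e al_aut cls(1)[OF assms] by simp
  then show "m x y \<in> carrier BG" by (rule aut_Bij)
  show "m x y x = y" "m x y y = x" using e al_swap[OF cls(1)[OF assms]] cls(2)[OF assms]
    by (auto simp: insert_commute)
  show "m y x = m x y" using maut[OF Esym[OF assms]] e cls_sym by simp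
qed

lemma al_inv: "F \<in> P \<Longrightarrow> inv\<^bsub>BG\<^esub> (al F) = al F"
proof -
  assume F: "F \<in> P"
  have a: "graph_aut V E (al F)" using al_aut[OF F] .
  have "swaps_edges (inv\<^bsub>BG\<^esub> (al F)) F" unfolding swaps_edges_def
  proof (intro allI impI)
    fix a b assume ab: "{a, b} \<in> F"
    then have "al F b = a" using al_swap[OF F] by (simp add: insert_commute)
    moreover have "b \<in> V" using inF_E[OF F ab] EV by blast
    ultimately show "(inv\<^bsub>BG\<^esub> (al F)) a = b" using inv_apply[OF aut_Bij[OF a], of b] by simp
  qed
  then show ?thesis using uniq[OF F aut_inv[OF a]] by simp
qed

lemma m_invol: "E x y \<Longrightarrow> inv\<^bsub>BG\<^esub> (m x y) = m x y"
  using m_props al_inv cls by simp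

lemma Theta_aut:
  assumes f: "graph_aut V E f" and ab: "E a b" and xy: "E x y"
  shows "Theta E (f a) (f b) (f x) (f y) \<longleftrightarrow> Theta E a b x y"
proof -
  have V: "a \<in> V" "b \<in> V" "x \<in> V" "y \<in> V" using EV ab xy by auto
  have "E (f a) (f b)" "E (f x) (f y)" using aut_E f ab xy by auto
  then show ?thesis using ab xy d_aut[OF f] V unfolding Theta_def by auto
qed

lemma m_conj:
  assumes f: "graph_aut V E f" and xy: "E x y"
  shows "m (f x) (f y) = f \<otimes>\<^bsub>BG\<^esub> m x y \<otimes>\<^bsub>BG\<^esub> inv\<^bsub>BG\<^esub> f"
proof -
  have fxy: "E (f x) (f y)" using aut_E f xy by blast
  define F where "F = cls (f x) (f y)"
  have F: "F \<in> P" using cls(1)[OF fxy] F_def by simp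
  define g where "g = f \<otimes>\<^bsub>BG\<^esub> m x y \<otimes>\<^bsub>BG\<^esub> inv\<^bsub>BG\<^esub> f"
  have fc: "f \<in> carrier BG" using aut_Bij[OF f] .
  have ic: "inv\<^bsub>BG\<^esub> f \<in> carrier BG" using group.inv_closed[OF BG fc] .
  have mc: "m x y \<in> carrier BG" using m_props(3)[OF xy] .
  have ga: "graph_aut V E g" unfolding g_def
    using aut_mult[OF aut_mult[OF f m_props(2)[OF xy]] aut_inv[OF f]] .
  have "swaps_edges g F" unfolding swaps_edges_def
  proof (intro allI impI)
    fix a b assume ab: "{a, b} \<in> F"
    have Eab: "E a b" using inF_E[OF F ab] .
    have abV: "a \<in> V" "b \<in> V" using EV Eab by auto
    define a' where "a' = (inv\<^bsub>BG\<^esub> f) a"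
    define b' where "b' = (inv\<^bsub>BG\<^esub> f) b"
    have a'V: "a' \<in> V" "b' \<in> V" using Bij_V[OF ic] abV a'_def b'_def by auto
    have fa: "f a' = a" "f b' = b" using inv_apply[OF fc] abV a'_def b'_def by auto
    have Ea: "E a' b'" using f a'V Eab fa unfolding graph_aut_def by blast
    have "cls a b = F" using cls_eq[OF F ab] .
    then have "Theta E a b (f x) (f y)" using Theta_iff[OF Eab fxy] F_def by simp
    then have "Theta E a' b' x y" using Theta_aut[OF f Ea xy] fa by simp
    then have "cls a' b' = cls x y" using Theta_iff[OF Ea xy] by simp
    then have "{a', b'} \<in> cls x y" using cls(2)[OF Ea] by simp
    then have "m x y a' = b'" using m_props(1)[OF xy] al_swap cls(1)[OF xy] by simp
    moreover have "g a = f (m x y a')"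
      unfolding g_def a'_def
      using mult_apply[OF monoid.m_closed[OF group.is_monoid[OF BG] fc mc] ic abV(1)] mult_apply[OF fc mc Bij_V[OF ic abV(1)]] by simp
    ultimately show "g a = b" using fa by simp
  qed
  then have "g = al F" using uniq[OF F ga] by simp
  then show ?thesis using m_props(1)[OF fxy] F_def g_def by simp
qed


abbreviation "A \<equiv> mirror_group V E"

lemma aut_one: "graph_aut V E \<one>\<^bsub>BG\<^esub>"
  unfolding graph_aut_def using one_apply monoid.one_closed[OF group.is_monoid[OF BG]] carrier_BG by auto

lemma A_sub: "mirror_auts V E \<subseteq> carrier BG"
  unfolding mirror_auts_def using m_props(3) by blast

lemma A_aut: "g \<in> A \<Longrightarrow> graph_aut V E g"
  unfolding mirror_group_def
proof (induction rule: generate.induct)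
  case one then show ?case by (rule aut_one)
next
  case (incl h) then show ?case unfolding mirror_auts_def using m_props(2) by blast
next
  case (inv h) then show ?case unfolding mirror_auts_def using m_props(2) aut_inv by blast
next
  case (eng h1 h2) then show ?case using aut_mult by blast
qed

lemma A_c: "g \<in> A \<Longrightarrow> g \<in> carrier BG"
  using A_aut aut_Bij by blast

lemma A_subgroup: "subgroup A BG"
  unfolding mirror_group_def using group.generate_is_subgroup[OF BG A_sub] .

fun wk :: "'a list \<Rightarrow> bool" where
  "wk [] = False"
| "wk [x] = (x \<in> V)"
| "wk (x # y # zs) = (E x y \<and> wk (y # zs))"

fun wp :: "'a list \<Rightarrow> 'a \<Rightarrow> 'a" where
  "wp [] = \<one>\<^bsub>BG\<^esub>"
| "wp [x] = \<one>\<^bsub>BG\<^esub>"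
| "wp (x # y # zs) = wp (y # zs) \<otimes>\<^bsub>BG\<^esub> m x y"

lemma wk_ne: "wk W \<Longrightarrow> W \<noteq> []"
  by (cases W) auto

lemma wk_V: "wk W \<Longrightarrow> set W \<subseteq> V"
  by (induction W rule: wk.induct) (auto dest: EV)

lemma wk_hd: "wk W \<Longrightarrow> hd W \<in> V"
  using wk_V wk_ne by (metis hd_in_set subsetD)

lemma wk_last: "wk W \<Longrightarrow> last W \<in> V"
  using wk_V wk_ne by (metis last_in_set subsetD)

lemma wp_aut: "wk W \<Longrightarrow> graph_aut V E (wp W)"
  by (induction W rule: wp.induct) (auto intro: aut_one aut_mult m_props(2))

lemma wp_c: "wk W \<Longrightarrow> wp W \<in> carrier BG"
  using wp_aut aut_Bij by blast

lemma wp_A: "wk W \<Longrightarrow> wp W \<in> A"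
proof (induction W rule: wp.induct)
  case 1 then show ?case by simp
next
  case (2 x) then show ?case unfolding mirror_group_def by (simp add: generate.one)
next
  case (3 x y zs)
  then have "wp (y # zs) \<in> A" "m x y \<in> mirror_auts V E" unfolding mirror_auts_def by auto
  then show ?case unfolding mirror_group_def by (simp add: generate.eng generate.incl)
qed

lemma wp_apply: "wk W \<Longrightarrow> wp W (hd W) = last W"
proof (induction W rule: wp.induct)
  case 1 then show ?case by simp
next
  case (2 x) then show ?case using one_apply by simp
next
  case (3 x y zs)
  have xy: "E x y" and w: "wk (y # zs)" using 3(2) by auto
  have "wp (x # y # zs) x = wp (y # zs) (m x y x)"
    using mult_apply[OF wp_c[OF w] m_props(3)[OF xy]] EV[OF xy] by simp
  also have "\<dots> = last (y # zs)" using m_props(4)[OF xy] 3(1)[OF w] by simp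
  finally show ?case by simp
qed

lemma wk_app: "wk X \<Longrightarrow> wk Y \<Longrightarrow> last X = hd Y \<Longrightarrow> wk (X @ tl Y)"
proof (induction X rule: wk.induct)
  case 1 then show ?case by simp
next
  case (2 x)
  then show ?case using wk_ne[OF 2(2)] by (cases Y) auto
next
  case (3 x y zs)
  then show ?case by (cases "zs @ tl Y") auto
qed

lemma wp_app: "wk X \<Longrightarrow> wk Y \<Longrightarrow> last X = hd Y \<Longrightarrow> wp (X @ tl Y) = wp Y \<otimes>\<^bsub>BG\<^esub> wp X"
proof (induction X rule: wp.induct)
  case 1 then show ?case by simp
next
  case (2 x)
  have "[x] @ tl Y = Y" using 2 wk_ne[OF 2(2)] by (cases Y) auto
  then show ?case using monoid.r_one[OF group.is_monoid[OF BG] wp_c[OF 2(2)]] by simp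
next
  case (3 x y zs)
  have xy: "E x y" and w: "wk (y # zs)" using 3(2) by auto
  have "wp ((x # y # zs) @ tl Y) = wp ((y # zs) @ tl Y) \<otimes>\<^bsub>BG\<^esub> m x y" by simp
  also have "\<dots> = (wp Y \<otimes>\<^bsub>BG\<^esub> wp (y # zs)) \<otimes>\<^bsub>BG\<^esub> m x y" using 3 by simp
  also have "\<dots> = wp Y \<otimes>\<^bsub>BG\<^esub> (wp (y # zs) \<otimes>\<^bsub>BG\<^esub> m x y)"
    using group.is_monoid[OF BG] wp_c[OF 3(3)] wp_c[OF w] m_props(3)[OF xy] by (simp add: monoid.m_assoc)
  finally show ?case by simp
qed

lemma wk_app2: "wk X \<Longrightarrow> wk Y \<Longrightarrow> E (last X) (hd Y) \<Longrightarrow> wk (X @ Y) \<and>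
   wp (X @ Y) = wp Y \<otimes>\<^bsub>BG\<^esub> m (last X) (hd Y) \<otimes>\<^bsub>BG\<^esub> wp X"
proof -
  assume X: "wk X" and Y: "wk Y" and e: "E (last X) (hd Y)"
  obtain b bs where Yb: "Y = b # bs" using wk_ne[OF Y] by (cases Y) auto
  have Y': "wk (last X # Y)" using Y e Yb by simp
  have eq: "X @ tl (last X # Y) = X @ Y" by simp
  have "wp (last X # Y) = wp Y \<otimes>\<^bsub>BG\<^esub> m (last X) (hd Y)" using Yb by simp
  then show ?thesis using wk_app[OF X Y'] wp_app[OF X Y'] eq by simp
qed

lemma wk_split: "wk (X @ Y) \<Longrightarrow> X \<noteq> [] \<Longrightarrow> Y \<noteq> [] \<Longrightarrow> wk X \<and> wk Y \<and> E (last X) (hd Y)"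
proof (induction X rule: wk.induct)
  case 1 then show ?case by simp
next
  case (2 x) then show ?case by (cases Y) (auto dest: EV)
next
  case (3 x y zs) then show ?case by auto
qed

lemma wk_map: "graph_aut V E f \<Longrightarrow> wk W \<Longrightarrow> wk (map f W) \<and>
   wp (map f W) = f \<otimes>\<^bsub>BG\<^esub> wp W \<otimes>\<^bsub>BG\<^esub> inv\<^bsub>BG\<^esub> f"
proof (induction W rule: wp.induct)
  case 1 then show ?case by simp
next
  case (2 x) then show ?case using aut_V group.gconj_one[OF BG aut_Bij[OF 2(1)]] by simp
next
  case (3 x y zs)
  have xy: "E x y" and w: "wk (y # zs)" using 3(3) by auto
  have IH: "wk (map f (y # zs))" "wp (map f (y # zs)) = f \<otimes>\<^bsub>BG\<^esub> wp (y # zs) \<otimes>\<^bsub>BG\<^esub> inv\<^bsub>BG\<^esub> f"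
    using 3(1)[OF 3(2) w] by auto
  have "wk (map f (x # y # zs))" using IH aut_E[OF 3(2) xy] by simp
  moreover have "wp (map f (x # y # zs)) = wp (map f (y # zs)) \<otimes>\<^bsub>BG\<^esub> m (f x) (f y)" by simp
  moreover have "m (f x) (f y) = f \<otimes>\<^bsub>BG\<^esub> m x y \<otimes>\<^bsub>BG\<^esub> inv\<^bsub>BG\<^esub> f" by (rule m_conj[OF 3(2) xy])
  ultimately show ?case using IH(2) group.gconj_mult[OF BG aut_Bij[OF 3(2)] wp_c[OF w] m_props(3)[OF xy]] by simp
qed

lemma wk_rev: "wk W \<Longrightarrow> wk (rev W) \<and> wp (rev W) = inv\<^bsub>BG\<^esub> (wp W)"
proof (induction W rule: wp.induct)
  case 1 then show ?case by simp
next
  case (2 x) then show ?case using monoid.inv_one[OF group.is_monoid[OF BG]] by simp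
next
  case (3 x y zs)
  have xy: "E x y" and w: "wk (y # zs)" using 3(2) by auto
  have IH: "wk (rev (y # zs))" "wp (rev (y # zs)) = inv\<^bsub>BG\<^esub> (wp (y # zs))" using 3(1)[OF w] by auto
  have lr: "last (rev (y # zs)) = y" by simp
  have yx: "wk [y, x]" using Esym[OF xy] EV[OF xy] by simp
  have eq: "rev (x # y # zs) = rev (y # zs) @ tl [y, x]" by simp
  have "wk (rev (x # y # zs))" using wk_app[OF IH(1) yx] lr eq by simp
  moreover have "wp (rev (x # y # zs)) = wp [y, x] \<otimes>\<^bsub>BG\<^esub> inv\<^bsub>BG\<^esub> (wp (y # zs))"
    using wp_app[OF IH(1) yx] lr eq IH(2) by simp
  moreover have "wp [y, x] = \<one>\<^bsub>BG\<^esub> \<otimes>\<^bsub>BG\<^esub> m x y" using m_props(6)[OF xy] by simp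
  ultimately show ?case
    using group.grev[OF BG wp_c[OF w] m_props(3)[OF xy] m_invol[OF xy]] by simp
qed

lemma wk_path: "E\<^sup>*\<^sup>* x y \<Longrightarrow> x \<in> V \<Longrightarrow> \<exists>W. wk W \<and> hd W = x \<and> last W = y"
proof (induction rule: rtranclp_induct)
  case base then show ?case by (intro exI[of _ "[x]"]) simp
next
  case (step y z)
  then obtain W where W: "wk W" "hd W = x" "last W = y" by blast
  have "wk [z]" using EV step(2) by simp
  then have "wk (W @ [z])" using wk_app2[OF W(1)] W(3) step by auto
  then show ?case using W wk_ne[OF W(1)] by (intro exI[of _ "W @ [z]"]) simp
qed


lemma wk_splitF: "wk W \<Longrightarrow> \<not> (R F)\<^sup>*\<^sup>* (hd W) (last W) \<Longrightarrow>
  \<exists>W1 W2. W = W1 @ W2 \<and> W1 \<noteq> [] \<and> W2 \<noteq> [] \<and> {last W1, hd W2} \<in> F"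
proof (induction W rule: wk.induct)
  case 1 then show ?case by simp
next
  case (2 x) then show ?case by simp
next
  case (3 x y zs)
  show ?case
  proof (cases "{x, y} \<in> F")
    case True
    then show ?thesis by (intro exI[of _ "[x]"] exI[of _ "y # zs"]) simp
  next
    case False
    then have "R F x y" using 3(2) R_iff by simp
    then have "\<not> (R F)\<^sup>*\<^sup>* (hd (y # zs)) (last (y # zs))"
      using 3(3) converse_rtranclp_into_rtranclp[of "R F" x y] by auto
    then obtain W1 W2 where "y # zs = W1 @ W2" "W1 \<noteq> []" "W2 \<noteq> []" "{last W1, hd W2} \<in> F"
      using 3(1) 3(2) by auto
    then show ?thesis by (intro exI[of _ "x # W1"] exI[of _ W2]) simp
  qed
qed

lemma closed_one: "wk W \<Longrightarrow> hd W = last W \<Longrightarrow> wp W = \<one>\<^bsub>BG\<^esub>"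
proof (induction "length W" arbitrary: W rule: less_induct)
  case less
  show ?case
  proof (cases W rule: wp.cases)
    case 1 then show ?thesis by simp
  next
    case (2 x) then show ?thesis by simp
  next
    case (3 x y rest)
    have xy: "E x y" and yr: "wk (y # rest)" using less.prems(1) 3 by auto
    define F where "F = cls x y"
    have F: "F \<in> P" "{x, y} \<in> F" "{y, x} \<in> F" using cls[OF xy] F_def by (auto simp: insert_commute)
    have lyr: "last (y # rest) = x" using less.prems(2) 3 by simp
    have "\<not> (R F)\<^sup>*\<^sup>* y x" using sides(1)[OF F(1) F(3)] .
    then have "\<not> (R F)\<^sup>*\<^sup>* (hd (y # rest)) (last (y # rest))" using lyr by simp
    then obtain W1 W2 where sp: "y # rest = W1 @ W2" "W1 \<noteq> []" "W2 \<noteq> []" "{last W1, hd W2} \<in> F"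
      using wk_splitF[OF yr] by blast
    have ws: "wk W1" "wk W2" "E (last W1) (hd W2)" using wk_split[of W1 W2] yr sp by auto
    define a where "a = al F"
    have aa: "graph_aut V E a" using al_aut[OF F(1)] a_def by simp
    have ac: "a \<in> carrier BG" using aut_Bij[OF aa] .
    have ainv: "inv\<^bsub>BG\<^esub> a = a" using al_inv[OF F(1)] a_def by simp
    have mxy: "m x y = a" using m_props(1)[OF xy] F_def a_def by simp
    have mpq: "m (last W1) (hd W2) = a" using m_props(1)[OF ws(3)] cls_eq[OF F(1) sp(4)] a_def by simp
    have hW1: "hd W1 = y" using sp(1,2) by (cases W1) auto
    define M where "M = map a W1"
    have M: "wk M" "wp M = a \<otimes>\<^bsub>BG\<^esub> wp W1 \<otimes>\<^bsub>BG\<^esub> inv\<^bsub>BG\<^esub> a" using wk_map[OF aa ws(1)] M_def by auto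
    have lM: "last M = hd W2" using al_swap[OF F(1) sp(4)] sp(2) M_def a_def by (simp add: last_map)
    have hM: "hd M = x" using al_swap[OF F(1) F(3)] sp(2) M_def a_def hW1 by (simp add: hd_map)
    define W' where "W' = M @ tl W2"
    have W': "wk W'" "wp W' = wp W2 \<otimes>\<^bsub>BG\<^esub> wp M" using wk_app[OF M(1) ws(2) lM] wp_app[OF M(1) ws(2) lM] W'_def by auto
    have len: "length W' < length W" using 3 sp(1) W'_def M_def by (simp add: add.commute)
    have lW2: "last W2 = x" using lyr sp(1,3) by simp
    have hW': "hd W' = x" using hM M_def sp(2) W'_def by simp
    have lW': "last W' = x"
    proof (cases "tl W2 = []")
      case True then show ?thesis using lM W'_def lW2 sp(3) by (cases W2) auto
    next
      case False
      then have "last (tl W2) = last W2" by (cases W2) auto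
      then show ?thesis using False W'_def lW2 by simp
    qed
    have one: "wp W' = \<one>\<^bsub>BG\<^esub>" using less.hyps[OF len W'(1)] hW' lW' by simp
    have "wp W = wp (y # rest) \<otimes>\<^bsub>BG\<^esub> a" using 3 mxy by simp
    then have "wp W = wp (W1 @ W2) \<otimes>\<^bsub>BG\<^esub> a" using sp(1) by simp
    also have "wp (W1 @ W2) = wp W2 \<otimes>\<^bsub>BG\<^esub> a \<otimes>\<^bsub>BG\<^esub> wp W1" using wk_app2[OF ws] mpq by simp
    finally have "wp W = wp W2 \<otimes>\<^bsub>BG\<^esub> a \<otimes>\<^bsub>BG\<^esub> wp W1 \<otimes>\<^bsub>BG\<^esub> a" .
    also have "\<dots> = wp W2 \<otimes>\<^bsub>BG\<^esub> (a \<otimes>\<^bsub>BG\<^esub> wp W1 \<otimes>\<^bsub>BG\<^esub> inv\<^bsub>BG\<^esub> a)"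
      using group.greduce[OF BG wp_c[OF ws(2)] ac wp_c[OF ws(1)] ainv] by simp
    also have "\<dots> = wp W'" using W'(2) M(2) by simp
    finally show ?thesis using one by simp
  qed
qed

lemma gen_walk: "E a b \<Longrightarrow> v \<in> V \<Longrightarrow> \<exists>W. wk W \<and> hd W = v \<and> wp W = m a b"
proof -
  assume ab: "E a b" and v: "v \<in> V"
  define h where "h = m a b"
  have ha: "graph_aut V E h" "h \<in> carrier BG" using m_props[OF ab] h_def by auto
  obtain W1 where W1: "wk W1" "hd W1 = v" "last W1 = a" using wk_path[OF conn[OF v] v] EV[OF ab] by blast
  define M where "M = map h W1"
  have M: "wk M" "wp M = h \<otimes>\<^bsub>BG\<^esub> wp W1 \<otimes>\<^bsub>BG\<^esub> inv\<^bsub>BG\<^esub> h" using wk_map[OF ha(1) W1(1)] M_def by auto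
  have Rv: "wk (rev M)" "wp (rev M) = inv\<^bsub>BG\<^esub> (wp M)" using wk_rev[OF M(1)] by auto
  have "hd (rev M) = last M" using wk_ne[OF M(1)] by (simp add: hd_rev)
  also have "\<dots> = b" using M_def W1(3) wk_ne[OF W1(1)] m_props(4)[OF ab] h_def by (simp add: last_map)
  finally have hR: "hd (rev M) = b" .
  have e: "E (last W1) (hd (rev M))" using hR W1(3) ab by simp
  have W: "wk (W1 @ rev M)" "wp (W1 @ rev M) = wp (rev M) \<otimes>\<^bsub>BG\<^esub> m a b \<otimes>\<^bsub>BG\<^esub> wp W1"
    using wk_app2[OF W1(1) Rv(1) e] W1(3) hR by auto
  have "wp (W1 @ rev M) = inv\<^bsub>BG\<^esub> (h \<otimes>\<^bsub>BG\<^esub> wp W1 \<otimes>\<^bsub>BG\<^esub> inv\<^bsub>BG\<^esub> h) \<otimes>\<^bsub>BG\<^esub> h \<otimes>\<^bsub>BG\<^esub> wp W1"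
    using W(2) Rv(2) M(2) h_def by simp
  also have "\<dots> = h" using group.gconj_gen[OF BG ha(2) wp_c[OF W1(1)]] .
  finally show ?thesis using W(1) W1(2) wk_ne[OF W1(1)] h_def by (intro exI[of _ "W1 @ rev M"]) simp
qed

lemma A_walk: "g \<in> A \<Longrightarrow> v \<in> V \<Longrightarrow> \<exists>W. wk W \<and> hd W = v \<and> wp W = g"
  unfolding mirror_group_def
proof (induction rule: generate.induct)
  case one then show ?case by (intro exI[of _ "[v]"]) simp
next
  case (incl h)
  then obtain a b where "h = m a b" "E a b" unfolding mirror_auts_def by blast
  then show ?case using gen_walk incl by blast
next
  case (inv h)
  then obtain a b where "h = m a b" "E a b" unfolding mirror_auts_def by blast
  then show ?case using gen_walk inv m_invol by simp
next
  case (eng h1 h2)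
  obtain W1 where W1: "wk W1" "hd W1 = v" "wp W1 = h1" using eng by blast
  obtain W2 where W2: "wk W2" "hd W2 = v" "wp W2 = h2" using eng by blast
  have h1a: "graph_aut V E h1" using wp_aut W1 by blast
  define M where "M = map h1 W2"
  have M: "wk M" "wp M = h1 \<otimes>\<^bsub>BG\<^esub> h2 \<otimes>\<^bsub>BG\<^esub> inv\<^bsub>BG\<^esub> h1" using wk_map[OF h1a W2(1)] M_def W2(3) by auto
  have "hd M = h1 v" using M_def W2(2) wk_ne[OF W2(1)] by (simp add: hd_map)
  also have "\<dots> = last W1" using wp_apply[OF W1(1)] W1 by simp
  finally have lh: "last W1 = hd M" by simp
  have "wp (W1 @ tl M) = (h1 \<otimes>\<^bsub>BG\<^esub> h2 \<otimes>\<^bsub>BG\<^esub> inv\<^bsub>BG\<^esub> h1) \<otimes>\<^bsub>BG\<^esub> h1"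
    using wp_app[OF W1(1) M(1) lh] M(2) W1(3) by simp
  also have "\<dots> = h1 \<otimes>\<^bsub>BG\<^esub> h2" using group.gconj_prod[OF BG aut_Bij[OF h1a] wp_c[OF W2(1)]] W2(3) by simp
  finally show ?case using wk_app[OF W1(1) M(1) lh] W1(2) wk_ne[OF W1(1)]
    by (intro exI[of _ "W1 @ tl M"]) simp
qed

lemma stab: "g \<in> A \<Longrightarrow> v \<in> V \<Longrightarrow> g v = v \<Longrightarrow> g = \<one>\<^bsub>BG\<^esub>"
proof -
  assume g: "g \<in> A" and v: "v \<in> V" and gv: "g v = v"
  obtain W where W: "wk W" "hd W = v" "wp W = g" using A_walk[OF g v] by blast
  have "last W = v" using wp_apply[OF W(1)] W gv by simp
  then show ?thesis using closed_one[OF W(1)] W by simp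
qed

lemma trans: "u \<in> V \<Longrightarrow> w \<in> V \<Longrightarrow> \<exists>g\<in>A. g u = w"
proof -
  assume u: "u \<in> V" and w: "w \<in> V"
  obtain W where W: "wk W" "hd W = u" "last W = w" using wk_path[OF conn[OF u w] u] by blast
  then show ?thesis using wp_A[OF W(1)] wp_apply[OF W(1)] by auto
qed

lemma REG: "h1 \<in> A \<Longrightarrow> h2 \<in> A \<Longrightarrow> x \<in> V \<Longrightarrow> h1 x = h2 x \<Longrightarrow> h1 = h2"
proof -
  assume h: "h1 \<in> A" "h2 \<in> A" and x: "x \<in> V" and eq: "h1 x = h2 x"
  have c: "h1 \<in> carrier BG" "h2 \<in> carrier BG" using A_c h by auto
  have ic: "inv\<^bsub>BG\<^esub> h1 \<in> carrier BG" using group.inv_closed[OF BG c(1)] .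
  define k where "k = inv\<^bsub>BG\<^esub> h1 \<otimes>\<^bsub>BG\<^esub> h2"
  have kA: "k \<in> A" unfolding k_def
    using subgroup.m_closed[OF A_subgroup subgroup.m_inv_closed[OF A_subgroup h(1)] h(2)] .
  have "k x = (inv\<^bsub>BG\<^esub> h1) (h2 x)" unfolding k_def using mult_apply[OF ic c(2) x] .
  also have "\<dots> = x" using eq inv_apply[OF c(1) x] by simp
  finally have "k = \<one>\<^bsub>BG\<^esub>" using stab[OF kA x] by simp
  then have "h1 \<otimes>\<^bsub>BG\<^esub> k = h1" using monoid.r_one[OF group.is_monoid[OF BG] c(1)] by simp
  moreover have "h1 \<otimes>\<^bsub>BG\<^esub> k = h2" unfolding k_def using group.inv_cancel_assoc(2)[OF BG c] .
  ultimately show ?thesis by simp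
qed

lemma cay:
  assumes v: "v \<in> V"
  shows "graph_iso V E A (cayley_adj BG {m v u | u. E v u})"
proof -
  define ph where "ph w = (THE h. h \<in> A \<and> h w = v)" for w
  have ph: "ph w \<in> A \<and> ph w w = v" if w: "w \<in> V" for w
  proof -
    have "\<exists>!h. h \<in> A \<and> h w = v"
    proof -
      obtain h where "h \<in> A" "h w = v" using trans[OF w v] by blast
      moreover have "h' = h" if "h' \<in> A" "h' w = v" for h' using REG[OF that(1) \<open>h \<in> A\<close> w] that \<open>h w = v\<close> by simp
      ultimately show ?thesis by blast
    qed
    then show ?thesis unfolding ph_def by (rule theI')
  qed
  have phaut: "graph_aut V E (ph w)" if "w \<in> V" for w using A_aut ph that by blast
  have bij: "bij_betw ph V A"
  proof (rule bij_betwI')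
    fix x y assume xy: "x \<in> V" "y \<in> V"
    show "(ph x = ph y) = (x = y)"
    proof
      assume "ph x = ph y"
      moreover have "ph x x = v" "ph y y = v" using ph xy by auto
      ultimately have "ph x x = ph x y" by simp
      then show "x = y" using aut_inj[OF phaut[OF xy(1)] xy] by simp
    qed simp
  next
    fix x assume "x \<in> V" then show "ph x \<in> A" using ph by blast
  next
    fix h assume h: "h \<in> A"
    have hc: "h \<in> carrier BG" using A_c h .
    define w where "w = (inv\<^bsub>BG\<^esub> h) v"
    have w: "w \<in> V" using Bij_V[OF group.inv_closed[OF BG hc] v] w_def by simp
    have "h w = v" using inv_apply[OF hc v] w_def by simp
    then have "ph w = h" using REG[OF _ h w] ph[OF w] by simp
    then show "\<exists>x\<in>V. h = ph x" using w by (intro bexI[of _ w]) simp_all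
  qed
  have adj: "E x y \<longleftrightarrow> cayley_adj BG {m v u | u. E v u} (ph x) (ph y)" if xy: "x \<in> V" "y \<in> V" for x y
  proof
    assume e: "E x y"
    define u where "u = ph x y"
    have "E (ph x x) (ph x y)" using aut_E[OF phaut[OF xy(1)] e] .
    then have Evu: "E v u" using ph[OF xy(1)] u_def by simp
    have sA: "m v u \<in> A" unfolding mirror_group_def mirror_auts_def using Evu by (blast intro: generate.incl)
    have phy: "ph y \<in> A" using ph[OF xy(2)] by simp
    have prodA: "m v u \<otimes>\<^bsub>BG\<^esub> ph y \<in> A" using subgroup.m_closed[OF A_subgroup sA phy] .
    have "(m v u \<otimes>\<^bsub>BG\<^esub> ph y) y = m v u (ph y y)"
      using mult_apply[OF m_props(3)[OF Evu] A_c[OF phy] xy(2)] .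
    also have "\<dots> = u" using ph[OF xy(2)] m_props(4)[OF Evu] by simp
    finally have "ph x = m v u \<otimes>\<^bsub>BG\<^esub> ph y" using REG[OF _ prodA xy(2)] ph[OF xy(1)] u_def by simp
    then show "cayley_adj BG {m v u | u. E v u} (ph x) (ph y)" unfolding cayley_adj_def using Evu by blast
  next
    assume "cayley_adj BG {m v u | u. E v u} (ph x) (ph y)"
    then obtain u where Evu: "E v u" and eq: "ph x = m v u \<otimes>\<^bsub>BG\<^esub> ph y" unfolding cayley_adj_def by blast
    have phy: "ph y \<in> A" using ph[OF xy(2)] by simp
    have "ph x y = m v u (ph y y)" using eq mult_apply[OF m_props(3)[OF Evu] A_c[OF phy] xy(2)] by simp
    also have "\<dots> = u" using ph[OF xy(2)] m_props(4)[OF Evu] by simp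
    finally have "E (ph x x) (ph x y)" using ph[OF xy(1)] Evu by simp
    then show "E x y" using phaut[OF xy(1)] xy unfolding graph_aut_def by blast
  qed
  show ?thesis unfolding graph_iso_def using bij adj by blast
qed

end

theorem mainTheorem9:
  fixes V :: "'a set" and E :: "'a \<Rightarrow> 'a \<Rightarrow> bool"
  assumes "mirror_graph V E"
  shows "(\<forall>u\<in>V. \<forall>w\<in>V. \<exists>\<alpha>\<in>mirror_group V E. \<alpha> u = w)
       \<and> (\<forall>\<alpha>\<in>mirror_group V E. \<forall>v\<in>V. \<alpha> v = v \<longrightarrow> \<alpha> = \<one>\<^bsub>BijGroup V\<^esub>)
       \<and> (\<forall>v\<in>V. graph_iso V E (mirror_group V E)
             (cayley_adj (BijGroup V) {mirror_aut V E v u | u. E v u}))"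
proof -
  have "finite_connected_simple_graph V E \<and> (\<exists>P. \<Union>P = edges E \<and> {} \<notin> P \<and> (\<forall>F1\<in>P. \<forall>F2\<in>P. F1 \<noteq> F2 \<longrightarrow> F1 \<inter> F2 = {}) \<and>
        (\<forall>F\<in>P. \<exists>\<alpha>. graph_aut V E \<alpha> \<and> swaps_edges \<alpha> F \<and>
            (\<exists>C1 C2. C1 \<noteq> C2 \<and> components V (remove_edges E F) = {C1, C2} \<and>
                     \<alpha> ` C1 = C2 \<and> \<alpha> ` C2 = C1)))"
    using assms unfolding mirror_graph_def .
  then obtain P where G: "finite_connected_simple_graph V E" and P: "\<Union>P = edges E" "{} \<notin> P"
     "\<forall>F1\<in>P. \<forall>F2\<in>P. F1 \<noteq> F2 \<longrightarrow> F1 \<inter> F2 = {}"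
     "\<forall>F\<in>P. \<exists>\<alpha>. graph_aut V E \<alpha> \<and> swaps_edges \<alpha> F \<and>
            (\<exists>C1 C2. C1 \<noteq> C2 \<and> components V (remove_edges E F) = {C1, C2} \<and>
                     \<alpha> ` C1 = C2 \<and> \<alpha> ` C2 = C1)"
    by (elim conjE exE)
  interpret mg V E P by (rule mg.intro[OF G P])
  show ?thesis using trans stab cay by blast
qed

end
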